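(* Let $N\geq 2$, $\kappa=0$, and let $\mu_L>0>\mu_R$ be fixed (independent of $\beta$). Let $\rho_\beta$ be the unique stationary distribution of the boundary driven exclusion process on $\{0,1\}^N$ at inverse temperature $\beta$. Then for $x\in\{0,1\}^N$, $$\rho_\beta(x)\asymp 1 \quad\text{if and only if}\quad x(1)=1 \text{ and } x(N)=0.$$
   Context: Configurations are $x\in\{0,1\}^N$; $x(i)=1$ means site $i$ is occupied. For $i\neq j$, $x^{i,j}$ is $x$ with occupations of sites $i,j$ exchanged; for $i\in\{1,N\}$, $x^i$ is $x$ with the occupation of site $i$ flipped. The boundary driven exclusion process (the boundary driven Kawasaki process with zero coupling) is the continuous-time Markov jump process whose only transitions are: for $|i-j|=1$ with $x(i)\neq x(j)$, $x\to x^{i,j}$ at rate $1$; and for $i\in\{1,N\}$, $x\to x^i$ at rate $\exp[\tfrac{\beta\mu_i}{2}(1-2x(i))]$, with $\mu_1=\mu_L$, $\mu_N=\mu_R$. It has a unique stationary distribution $\rho_\beta$. Notation: $f(\beta)\asymp 1$ means $\lim_{\beta\to\infty}\frac1\beta\log f(\beta)=0$. *)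

theory Defs
  imports "HOL-Analysis.Analysis"
begin

text \<open>Configurations x in {0,1}^N are represented as functions nat => bool
  that are False outside the sites {1..N}; x i = True means site i is occupied.\<close>

definition configs :: "nat \<Rightarrow> (nat \<Rightarrow> bool) set" where
  "configs N = {x. \<forall>i. x i \<longrightarrow> i \<in> {1..N}}"

definition occ :: "(nat \<Rightarrow> bool) \<Rightarrow> nat \<Rightarrow> real" where
  "occ x i = (if x i then 1 else 0)"

definition exch :: "(nat \<Rightarrow> bool) \<Rightarrow> nat \<Rightarrow> nat \<Rightarrow> (nat \<Rightarrow> bool)" where
  "exch x i j = x(i := x j, j := x i)"

definition flip :: "(nat \<Rightarrow> bool) \<Rightarrow> nat \<Rightarrow> (nat \<Rightarrow> bool)" where
  "flip x i = x(i := \<not> x i)"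

text \<open>Jump rate from x to y (x different from y) of the boundary driven exclusion process
  (boundary driven Kawasaki process with zero coupling) on N sites, at inverse temperature
  beta, with boundary chemical potentials muL (site 1) and muR (site N).\<close>
definition rate :: "nat \<Rightarrow> real \<Rightarrow> real \<Rightarrow> real \<Rightarrow> (nat \<Rightarrow> bool) \<Rightarrow> (nat \<Rightarrow> bool) \<Rightarrow> real" where
  "rate N \<beta> muL muR x y =
     (if x = y then 0 else
       (if \<exists>i. 1 \<le> i \<and> i < N \<and> x i \<noteq> x (Suc i) \<and> y = exch x i (Suc i) then 1 else 0)
     + (if y = flip x 1 then exp (\<beta> * muL / 2 * (1 - 2 * occ x 1)) else 0)
     + (if y = flip x N then exp (\<beta> * muR / 2 * (1 - 2 * occ x N)) else 0))"

definition stationary ::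
  "nat \<Rightarrow> real \<Rightarrow> real \<Rightarrow> real \<Rightarrow> ((nat \<Rightarrow> bool) \<Rightarrow> real) \<Rightarrow> bool" where
  "stationary N \<beta> muL muR \<rho> \<longleftrightarrow>
     (\<forall>x\<in>configs N. \<rho> x \<ge> 0) \<and>
     (\<Sum>x\<in>configs N. \<rho> x) = 1 \<and>
     (\<forall>x\<in>configs N.
        (\<Sum>y\<in>configs N. \<rho> y * rate N \<beta> muL muR y x)
          = \<rho> x * (\<Sum>y\<in>configs N. rate N \<beta> muL muR x y))"

definition asymp_one :: "(real \<Rightarrow> real) \<Rightarrow> bool" where
  "asymp_one f \<longleftrightarrow> ((\<lambda>\<beta>. ln (f \<beta>) / \<beta>) \<longlongrightarrow> 0) at_top"

end

theory Submission imports Defs begin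

lemma configs_finite: "finite (configs N)"
proof -
  have "configs N \<subseteq> (\<lambda>S i. i \<in> S) ` Pow {1..N}"
  proof
    fix x assume "x \<in> configs N"
    hence "x = (\<lambda>i. i \<in> {i. x i})" "{i. x i} \<in> Pow {1..N}" by (auto simp: configs_def)
    thus "x \<in> (\<lambda>S i. i \<in> S) ` Pow {1..N}" by blast
  qed
  thus ?thesis by (rule finite_subset) auto
qed

lemma rate_nonneg: "rate N \<beta> a b x y \<ge> 0"
  by (simp add: rate_def add_nonneg_nonneg)

lemma rate_ge_exch:
  assumes "1 \<le> i" "i < N" "x i \<noteq> x (Suc i)"
  shows "rate N \<beta> a b x (exch x i (Suc i)) \<ge> 1"
proof -
  have ne: "x \<noteq> exch x i (Suc i)"
  proof
    assume "x = exch x i (Suc i)"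
    hence "x i = exch x i (Suc i) i" by simp
    thus False using assms by (simp add: exch_def)
  qed
  have "(if \<exists>j. 1 \<le> j \<and> j < N \<and> x j \<noteq> x (Suc j) \<and> exch x i (Suc i) = exch x j (Suc j) then 1 else 0) = (1::real)"
    using assms by auto
  thus ?thesis unfolding rate_def using ne by (simp add: add_nonneg_nonneg)
qed

lemma rate_ge_flip:
  assumes "k = 1 \<or> k = N"
  shows "rate N \<beta> a b x (flip x k) \<ge> (if k = 1 then exp (\<beta>*a/2*(1-2 * occ x 1)) else exp (\<beta>*b/2*(1-2 * occ x N)))"
proof -
  have ne: "x \<noteq> flip x k"
  proof
    assume "x = flip x k"
    hence "x k = flip x k k" by simp
    thus False by (simp add: flip_def)
  qed
  show ?thesis using assms unfolding rate_def using ne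
    by (auto simp: add_nonneg_nonneg add_increasing add_increasing2)
qed

lemma rate_ge_flip1: "rate N \<beta> a b x (flip x 1) \<ge> exp (\<beta>*a/2*(1-2 * occ x 1))"
  using rate_ge_flip[of 1 N] by simp

lemma rate_ge_flipN: "N \<noteq> 1 \<Longrightarrow> rate N \<beta> a b x (flip x N) \<ge> exp (\<beta>*b/2*(1-2 * occ x N))"
  using rate_ge_flip[of N N] by simp

definition Rout :: "nat \<Rightarrow> real \<Rightarrow> real \<Rightarrow> real \<Rightarrow> (nat \<Rightarrow> bool) \<Rightarrow> real" where
  "Rout N \<beta> a b x = (\<Sum>y\<in>configs N. rate N \<beta> a b x y)"

lemma Rout_bound:
  assumes "x \<in> configs N"
  shows "Rout N \<beta> a b x \<le> real N + exp (\<beta>*a/2*(1-2 * occ x 1)) + exp (\<beta>*b/2*(1-2 * occ x N))"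
proof -
  let ?P = "\<lambda>y. \<exists>i. 1 \<le> i \<and> i < N \<and> x i \<noteq> x (Suc i) \<and> y = exch x i (Suc i)"
  let ?e1 = "exp (\<beta>*a/2*(1-2 * occ x 1))" and ?eN = "exp (\<beta>*b/2*(1-2 * occ x N))"
  have fin: "finite (configs N)" by (rule configs_finite)
  have "Rout N \<beta> a b x \<le> (\<Sum>y\<in>configs N. (if ?P y then 1 else 0) + (if y = flip x 1 then ?e1 else 0) + (if y = flip x N then ?eN else 0))"
    unfolding Rout_def
    by (rule sum_mono) (auto simp: rate_def add_nonneg_nonneg)
  also have "\<dots> = (\<Sum>y\<in>configs N. if ?P y then 1 else 0) + (\<Sum>y\<in>configs N. if y = flip x 1 then ?e1 else 0) + (\<Sum>y\<in>configs N. if y = flip x N then ?eN else 0)"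
    by (simp add: sum.distrib)
  also have "(\<Sum>y\<in>configs N. if y = flip x 1 then ?e1 else 0) \<le> ?e1"
    using fin by (simp add: sum.delta)
  also have "(\<Sum>y\<in>configs N. if y = flip x N then ?eN else 0) \<le> ?eN"
    using fin by (simp add: sum.delta)
  also have "(\<Sum>y\<in>configs N. if ?P y then 1 else (0::real)) \<le> real N"
  proof -
    have "(\<Sum>y\<in>configs N. if ?P y then 1 else (0::real)) = real (card {y\<in>configs N. ?P y})"
      using fin by (simp add: sum.If_cases Int_def)
    also have "card {y\<in>configs N. ?P y} \<le> card ((\<lambda>i. exch x i (Suc i)) ` {1..<N})"
      by (rule card_mono) auto
    also have "\<dots> \<le> card {1..<N}" by (rule card_image_le) simp
    also have "\<dots> \<le> N" by simp
    finally show ?thesis by simp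
  qed
  finally show ?thesis by simp
qed

lemma finite_common:
  fixes P :: "nat \<Rightarrow> 'a \<Rightarrow> bool"
  assumes "finite A" "\<forall>y\<in>A. \<exists>k. P k y" "\<forall>k k' y. P k y \<longrightarrow> k \<le> k' \<longrightarrow> P k' y"
  shows "\<exists>K. \<forall>y\<in>A. P K y"
  using assms
proof (induction A rule: finite_induct)
  case empty then show ?case by simp
next
  case (insert a A)
  have mono: "\<And>k k' y. P k y \<Longrightarrow> k \<le> k' \<Longrightarrow> P k' y" using insert.prems(2) by blast
  have "\<forall>y\<in>A. \<exists>k. P k y" using insert.prems(1) by blast
  then obtain K where K: "\<forall>y\<in>A. P K y" using insert.IH insert.prems(2) by blast
  from insert.prems(1) obtain k where k: "P k a" by blast
  have "\<forall>y\<in>insert a A. P (max K k) y"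
  proof
    fix y assume "y \<in> insert a A"
    then show "P (max K k) y"
    proof
      assume "y = a" thus ?thesis using mono[OF k max.cobounded2] by simp
    next
      assume "y \<in> A" thus ?thesis using K mono[OF _ max.cobounded1] by blast
    qed
  qed
  thus ?case by blast
qed

definition good :: "nat \<Rightarrow> (nat \<Rightarrow> bool) set" where
  "good N = {x\<in>configs N. x 1 \<and> \<not> x N}"

definition mstep :: "nat \<Rightarrow> (nat \<Rightarrow> bool) \<Rightarrow> (nat \<Rightarrow> bool) \<Rightarrow> bool" where
  "mstep N y x \<longleftrightarrow> y \<in> good N \<and> x \<in> good N \<and>
     ((\<exists>i. 2 \<le> i \<and> Suc i < N \<and> y i \<noteq> y (Suc i) \<and> x = exch y i (Suc i))
      \<or> (3 \<le> N \<and> \<not> y 2 \<and> x = y(2 := True))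
      \<or> (3 \<le> N \<and> y (N-1) \<and> x = y(N-1 := False)))"

lemma good_upd: "x \<in> good N \<Longrightarrow> 2 \<le> i \<Longrightarrow> i < N \<Longrightarrow> x(i := v) \<in> good N"
  by (auto simp: good_def configs_def)

lemma remove_reach_aux:
  "N - i = Suc d \<Longrightarrow> x \<in> good N \<Longrightarrow> x i \<Longrightarrow> 2 \<le> i \<Longrightarrow> (\<forall>j. i < j \<and> j < N \<longrightarrow> \<not> x j)
   \<Longrightarrow> (mstep N)\<^sup>*\<^sup>* x (x(i := False))"
proof (induction d arbitrary: i x)
  case (0 i x)
  hence iN: "i = N - 1" "3 \<le> N" by auto
  have g: "x(i := False) \<in> good N" using good_upd[of x N i False] 0 by simp
  have "x (N - 1)" using 0 iN by simp
  hence "3 \<le> N \<and> x (N-1) \<and> x(i := False) = x(N-1 := False)" using iN by simp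
  hence "mstep N x (x(i := False))"
    unfolding mstep_def using 0(2) g by blast
  thus ?case by (metis r_into_rtranclp)
next
  case (Suc d i x)
  hence lt: "Suc i < N" by simp
  have xs: "\<not> x (Suc i)" using Suc.prems(5) lt by simp
  define x' where "x' = exch x i (Suc i)"
  have x'eq: "x' = x(i := False, Suc i := True)" unfolding x'_def exch_def using Suc.prems(3) xs by simp
  have g: "x' \<in> good N" unfolding x'eq using good_upd Suc.prems(2,4) lt by simp
  have "2 \<le> i \<and> Suc i < N \<and> x i \<noteq> x (Suc i) \<and> x' = exch x i (Suc i)"
    using Suc.prems(3,4) lt xs x'_def by simp
  hence st: "mstep N x x'" unfolding mstep_def using Suc.prems(2) g by blast
  have a1: "N - Suc i = Suc d" using Suc.prems(1) by simp
  have a2: "x' (Suc i)" by (simp add: x'eq)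
  have a3: "\<forall>j. Suc i < j \<and> j < N \<longrightarrow> \<not> x' j" using Suc.prems(5) by (simp add: x'eq)
  have a4: "2 \<le> Suc i" using Suc.prems(4) by simp
  have ih: "(mstep N)\<^sup>*\<^sup>* x' (x'(Suc i := False))"
    by (rule Suc.IH[OF a1 g a2 a4 a3])
  moreover have "x'(Suc i := False) = x(i := False)" unfolding x'eq using xs by (simp add: fun_eq_iff)
  ultimately show ?case using st by (metis converse_rtranclp_into_rtranclp)
qed

lemma add_reach_aux:
  "i = d + 2 \<Longrightarrow> x \<in> good N \<Longrightarrow> \<not> x i \<Longrightarrow> i < N \<Longrightarrow> (\<forall>j. 2 \<le> j \<and> j < i \<longrightarrow> \<not> x j)
   \<Longrightarrow> (mstep N)\<^sup>*\<^sup>* x (x(i := True))"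
proof (induction d arbitrary: i)
  case (0 i)
  hence i2: "i = 2" by simp
  have g: "x(2 := True) \<in> good N" using good_upd[of x N 2 True] 0 i2 by simp
  have "3 \<le> N \<and> \<not> x 2 \<and> x(2 := True) = x(2 := True)" using 0 i2 by simp
  hence "mstep N x (x(2 := True))"
    unfolding mstep_def using 0(2) g by blast
  thus ?case using i2 by (metis r_into_rtranclp)
next
  case (Suc d i)
  have b1: "d + 2 = d + 2" by simp
  have b2: "\<not> x (d+2)" using Suc.prems(1,5) by simp
  have b3: "d + 2 < N" using Suc.prems(1,4) by simp
  have b4: "\<forall>j. 2 \<le> j \<and> j < d + 2 \<longrightarrow> \<not> x j" using Suc.prems(1,5) by simp
  have h1: "(mstep N)\<^sup>*\<^sup>* x (x(d+2 := True))"
    by (rule Suc.IH[OF b1 Suc.prems(2) b2 b3 b4])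
  define y where "y = x(d+2 := True)"
  have gy: "y \<in> good N" unfolding y_def using good_upd Suc.prems(2) b3 by simp
  have ex: "exch y (d+2) (Suc (d+2)) = x(i := True)"
    unfolding y_def exch_def using Suc.prems(1,3) b2 by (simp add: fun_eq_iff)
  have gx: "x(i := True) \<in> good N" using good_upd Suc.prems(1,2,4) by simp
  have "2 \<le> d+2 \<and> Suc (d+2) < N \<and> y (d+2) \<noteq> y (Suc (d+2)) \<and> x(i := True) = exch y (d+2) (Suc (d+2))"
    using Suc.prems(1,3,4) ex by (simp add: y_def)
  hence "mstep N y (x(i := True))"
    unfolding mstep_def using gy gx by blast
  thus ?case using h1 y_def by (metis rtranclp.rtrancl_into_rtrancl)
qed

definition cnt :: "nat \<Rightarrow> (nat \<Rightarrow> bool) \<Rightarrow> nat" where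
  "cnt N x = card {j\<in>{2..<N}. x j}"

definition e0 :: "nat \<Rightarrow> bool" where "e0 = (\<lambda>j. j = 1)"

lemma e0_good: "N \<ge> 2 \<Longrightarrow> e0 \<in> good N"
  by (auto simp: e0_def good_def configs_def)

lemma cnt0: assumes "x \<in> good N" "cnt N x = 0" shows "x = e0"
proof
  fix j
  have "{j\<in>{2..<N}. x j} = {}" using assms(2) unfolding cnt_def by simp
  thus "x j = e0 j" using assms(1) unfolding good_def configs_def e0_def
    by (cases "j = 1"; cases "j = N"; auto; fastforce)
qed

lemma reach_e0: "cnt N x = n \<Longrightarrow> x \<in> good N \<Longrightarrow> (mstep N)\<^sup>*\<^sup>* x e0"
proof (induction n arbitrary: x)
  case (0 x) thus ?case using cnt0 by auto
next
  case (Suc n x)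
  let ?S = "{j\<in>{2..<N}. x j}"
  have fS: "finite ?S" by simp
  have ne: "?S \<noteq> {}"
  proof
    assume "?S = {}" hence "cnt N x = 0" unfolding cnt_def by simp
    thus False using Suc.prems by simp
  qed
  define i where "i = Max ?S"
  have iS: "i \<in> ?S" unfolding i_def using fS ne by (rule Max_in)
  have imax: "\<forall>j. i < j \<and> j < N \<longrightarrow> \<not> x j"
  proof (intro allI impI notI)
    fix j assume j: "i < j \<and> j < N" "x j"
    hence "j \<in> ?S" using iS by auto
    hence "j \<le> i" unfolding i_def using fS by simp
    thus False using j by simp
  qed
  have r1: "(mstep N)\<^sup>*\<^sup>* x (x(i := False))"
    by (rule remove_reach_aux[of N i "N - i - 1"]) (use iS imax Suc.prems in auto)
  have "{j\<in>{2..<N}. (x(i:=False)) j} = ?S - {i}" by auto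
  hence "cnt N (x(i:=False)) = n" using Suc.prems iS fS unfolding cnt_def by simp
  moreover have "x(i:=False) \<in> good N" using good_upd Suc.prems iS by simp
  ultimately have "(mstep N)\<^sup>*\<^sup>* (x(i := False)) e0" using Suc.IH by blast
  thus ?case using r1 by simp
qed

lemma e0_reach: "cnt N x = n \<Longrightarrow> x \<in> good N \<Longrightarrow> (mstep N)\<^sup>*\<^sup>* e0 x"
proof (induction n arbitrary: x)
  case (0 x) thus ?case using cnt0 by auto
next
  case (Suc n x)
  let ?S = "{j\<in>{2..<N}. x j}"
  have fS: "finite ?S" by simp
  have ne: "?S \<noteq> {}"
  proof
    assume "?S = {}" hence "cnt N x = 0" unfolding cnt_def by simp
    thus False using Suc.prems by simp
  qed
  define i where "i = Min ?S"
  have iS: "i \<in> ?S" unfolding i_def using fS ne by (rule Min_in)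
  have imin: "\<forall>j. 2 \<le> j \<and> j < i \<longrightarrow> \<not> x j"
  proof (intro allI impI notI)
    fix j assume j: "2 \<le> j \<and> j < i" "x j"
    hence "j \<in> ?S" using iS by auto
    hence "i \<le> j" unfolding i_def using fS by simp
    thus False using j by simp
  qed
  have "{j\<in>{2..<N}. (x(i:=False)) j} = ?S - {i}" by auto
  hence "cnt N (x(i:=False)) = n" using Suc.prems iS fS unfolding cnt_def by simp
  moreover have g: "x(i:=False) \<in> good N" using good_upd Suc.prems iS by simp
  ultimately have r1: "(mstep N)\<^sup>*\<^sup>* e0 (x(i := False))" using Suc.IH by blast
  have "(mstep N)\<^sup>*\<^sup>* (x(i := False)) ((x(i := False))(i := True))"
    by (rule add_reach_aux[of i "i - 2"]) (use iS imin g in auto)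
  moreover have "(x(i := False))(i := True) = x" using iS by (auto simp: fun_eq_iff)
  ultimately show ?case using r1 by simp
qed

lemma good_connected: "y \<in> good N \<Longrightarrow> x \<in> good N \<Longrightarrow> (mstep N)\<^sup>*\<^sup>* y x"
  using reach_e0 e0_reach by (metis rtranclp_trans)


lemma flip_configs: "x \<in> configs N \<Longrightarrow> 1 \<le> k \<Longrightarrow> k \<le> N \<Longrightarrow> flip x k \<in> configs N"
  by (auto simp: flip_def configs_def)

lemma flip_flip: "flip (flip x k) k = x"
  by (simp add: flip_def)

context
  fixes N :: nat and muL muR \<beta> :: real and \<rho> :: "(nat \<Rightarrow> bool) \<Rightarrow> real"
  assumes N2: "N \<ge> 2" and mL: "muL > 0" and mR: "muR < 0" and bpos: "\<beta> > 0"
    and st: "stationary N \<beta> muL muR \<rho>"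
begin

lemma bmL: "\<beta> * muL > 0" using bpos mL by simp
lemma bmR: "\<beta> * muR < 0" using bpos mR by (simp add: mult_pos_neg)

lemma EF:
  "exp (-(\<beta>*muL/2)) \<le> 1" "exp (\<beta>*muL/2) \<ge> 1" "exp (\<beta>*muR/2) \<le> 1" "exp (-(\<beta>*muR/2)) \<ge> 1"
  using bmL bmR by auto

lemma e1_T: "x 1 \<Longrightarrow> exp (\<beta>*muL/2*(1-2 * occ x 1)) = exp (-(\<beta>*muL/2))" by (simp add: occ_def)
lemma e1_F: "\<not> x 1 \<Longrightarrow> exp (\<beta>*muL/2*(1-2 * occ x 1)) = exp (\<beta>*muL/2)" by (simp add: occ_def)
lemma eN_T: "x N \<Longrightarrow> exp (\<beta>*muR/2*(1-2 * occ x N)) = exp (-(\<beta>*muR/2))" by (simp add: occ_def)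
lemma eN_F: "\<not> x N \<Longrightarrow> exp (\<beta>*muR/2*(1-2 * occ x N)) = exp (\<beta>*muR/2)" by (simp add: occ_def)

lemma rho_nonneg: "x \<in> configs N \<Longrightarrow> \<rho> x \<ge> 0" using st by (simp add: stationary_def)

lemma rho_le1: assumes "x \<in> configs N" shows "\<rho> x \<le> 1"
proof -
  have "\<rho> x \<le> (\<Sum>y\<in>configs N. \<rho> y)"
    by (rule member_le_sum) (use assms rho_nonneg configs_finite in auto)
  thus ?thesis using st by (simp add: stationary_def)
qed

lemma prim: assumes "x \<in> configs N" "w \<in> configs N"
  shows "\<rho> x * rate N \<beta> muL muR x w \<le> \<rho> w * Rout N \<beta> muL muR w"
proof -
  have "\<rho> x * rate N \<beta> muL muR x w \<le> (\<Sum>y\<in>configs N. \<rho> y * rate N \<beta> muL muR y w)"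
    by (rule member_le_sum[of x _ "\<lambda>y. \<rho> y * rate N \<beta> muL muR y w"])
       (use assms rho_nonneg rate_nonneg configs_finite in auto)
  also have "\<dots> = \<rho> w * Rout N \<beta> muL muR w" using st assms(2) by (simp add: stationary_def Rout_def)
  finally show ?thesis .
qed

lemma Rout_nonneg: "Rout N \<beta> muL muR x \<ge> 0"
  unfolding Rout_def by (rule sum_nonneg) (rule rate_nonneg)

lemma R_good: assumes "x \<in> configs N" "x 1" "\<not> x N" shows "Rout N \<beta> muL muR x \<le> real N + 2"
  using Rout_bound[OF assms(1), where \<beta>=\<beta> and a=muL and b=muR] e1_T[of x, OF assms(2)] eN_F[of x, OF assms(3)] EF by linarith

lemma one_step:
  assumes "y \<in> configs N" "x \<in> configs N" "rate N \<beta> muL muR y x \<ge> 1" "Rout N \<beta> muL muR x \<le> real N + 2"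
  shows "\<rho> y / (real N + 2)^2 \<le> \<rho> x"
proof -
  have "\<rho> y \<le> \<rho> y * rate N \<beta> muL muR y x"
    using mult_left_mono[OF assms(3) rho_nonneg[OF assms(1)]] by simp
  also have "\<dots> \<le> \<rho> x * Rout N \<beta> muL muR x" by (rule prim[OF assms(1,2)])
  also have "\<dots> \<le> \<rho> x * (real N + 2)" by (rule mult_left_mono[OF assms(4) rho_nonneg[OF assms(2)]])
  also have "\<dots> \<le> \<rho> x * (real N + 2)^2"
    by (rule mult_left_mono[OF _ rho_nonneg[OF assms(2)]]) (simp add: power2_eq_square)
  finally show ?thesis by (simp add: pos_divide_le_eq)
qed

lemma two_step:
  assumes "y \<in> configs N" "z \<in> configs N" "x \<in> configs N"
    "rate N \<beta> muL muR y z \<ge> 1" "Rout N \<beta> muL muR z \<le> real N + 1 + G"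
    "rate N \<beta> muL muR z x \<ge> G" "G \<ge> 1" "Rout N \<beta> muL muR x \<le> real N + 2"
  shows "\<rho> y / (real N + 2)^2 \<le> \<rho> x"
proof -
  have rz: "\<rho> z \<ge> 0" and rx: "\<rho> x \<ge> 0" using rho_nonneg assms(2,3) by auto
  have GG: "real N + 1 + G \<le> G * (real N + 2)"
  proof -
    have "0 \<le> (G - 1) * (real N + 1)" using assms(7) by simp
    thus ?thesis by (simp add: algebra_simps)
  qed
  have "\<rho> y \<le> \<rho> y * rate N \<beta> muL muR y z"
    using mult_left_mono[OF assms(4) rho_nonneg[OF assms(1)]] by simp
  also have "\<dots> \<le> \<rho> z * Rout N \<beta> muL muR z" by (rule prim[OF assms(1,2)])
  also have "\<dots> \<le> \<rho> z * (G * (real N + 2))"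
    by (rule mult_left_mono[OF _ rz]) (use assms(5) GG in linarith)
  also have "\<dots> = (\<rho> z * G) * (real N + 2)" by simp
  also have "\<rho> z * G \<le> \<rho> x * (real N + 2)"
  proof -
    have "\<rho> z * G \<le> \<rho> z * rate N \<beta> muL muR z x" by (rule mult_left_mono[OF assms(6) rz])
    also have "\<dots> \<le> \<rho> x * Rout N \<beta> muL muR x" by (rule prim[OF assms(2,3)])
    also have "\<dots> \<le> \<rho> x * (real N + 2)" by (rule mult_left_mono[OF assms(8) rx])
    finally show ?thesis .
  qed
  hence "(\<rho> z * G) * (real N + 2) \<le> (\<rho> x * (real N + 2)) * (real N + 2)"
    by (rule mult_right_mono) simp
  finally have "\<rho> y \<le> \<rho> x * (real N + 2)^2" by (simp add: power2_eq_square mult.assoc)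
  thus ?thesis by (simp add: pos_divide_le_eq)
qed

lemma step_bound:
  assumes "mstep N y x"
  shows "\<rho> y / (real N + 2)^2 \<le> \<rho> x"
proof -
  have gy: "y \<in> configs N" "y 1" "\<not> y N" and gx: "x \<in> configs N" "x 1" "\<not> x N"
    using assms unfolding mstep_def good_def by auto
  have Rx: "Rout N \<beta> muL muR x \<le> real N + 2" by (rule R_good[OF gx])
  consider (ex) i where "2 \<le> i" "Suc i < N" "y i \<noteq> y (Suc i)" "x = exch y i (Suc i)"
    | (inj) "3 \<le> N" "\<not> y 2" "x = y(2 := True)"
    | (ej) "3 \<le> N" "y (N-1)" "x = y(N-1 := False)"
    using assms unfolding mstep_def by blast
  then show ?thesis
  proof cases
    case ex
    have "rate N \<beta> muL muR y x \<ge> 1" unfolding ex(4) by (rule rate_ge_exch) (use ex in auto)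
    thus ?thesis using one_step gy gx Rx by blast
  next
    case inj
    define z where "z = exch y 1 (Suc 1)"
    have zeq: "z = y(1 := False, 2 := True)" unfolding z_def exch_def using gy inj by (simp add: numeral_2_eq_2)
    have zc: "z \<in> configs N" using gy(1) inj(1) unfolding zeq configs_def by auto
    have r1: "rate N \<beta> muL muR y z \<ge> 1" unfolding z_def by (rule rate_ge_exch) (use gy inj N2 in \<open>auto simp: numeral_2_eq_2\<close>)
    have z1: "\<not> z 1" and zN: "\<not> z N" using gy inj unfolding zeq by auto
    have Rz: "Rout N \<beta> muL muR z \<le> real N + 1 + exp (\<beta>*muL/2)"
      using Rout_bound[OF zc, where \<beta>=\<beta> and a=muL and b=muR] e1_F[of z, OF z1] eN_F[of z, OF zN] EF by linarith
    have fz: "flip z 1 = x" unfolding zeq inj(3) flip_def using gy by (auto simp: fun_eq_iff)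
    have r2: "rate N \<beta> muL muR z x \<ge> exp (\<beta>*muL/2)"
    proof -
      have "exp (\<beta>*muL/2) \<le> rate N \<beta> muL muR z (flip z 1)"
        using rate_ge_flip1[where N=N and \<beta>=\<beta> and a=muL and b=muR and x=z] e1_F[of z, OF z1] by linarith
      thus ?thesis using fz by simp
    qed
    show ?thesis by (rule two_step[OF gy(1) zc gx(1) r1 Rz r2 EF(2) Rx])
  next
    case ej
    have sN: "Suc (N-1) = N" using N2 by simp
    define z where "z = exch y (N-1) (Suc (N-1))"
    have zeq: "z = y(N-1 := False, N := True)" unfolding z_def exch_def sN using gy ej by simp
    have zc: "z \<in> configs N" using gy(1) ej(1) unfolding zeq configs_def by auto
    have r1: "rate N \<beta> muL muR y z \<ge> 1" unfolding z_def by (rule rate_ge_exch) (use gy ej N2 sN in auto)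
    have z1: "z 1" and zN: "z N" using gy ej unfolding zeq by auto
    have Rz: "Rout N \<beta> muL muR z \<le> real N + 1 + exp (-(\<beta>*muR/2))"
      using Rout_bound[OF zc, where \<beta>=\<beta> and a=muL and b=muR] e1_T[of z, OF z1] eN_T[of z, OF zN] EF by linarith
    have fz: "flip z N = x" unfolding zeq ej(3) flip_def using gy ej by (auto simp: fun_eq_iff)
    have r2: "rate N \<beta> muL muR z x \<ge> exp (-(\<beta>*muR/2))"
      using rate_ge_flipN[where N=N and \<beta>=\<beta> and a=muL and b=muR and x=z] eN_T[of z, OF zN] fz N2 by simp
    show ?thesis by (rule two_step[OF gy(1) zc gx(1) r1 Rz r2 EF(4) Rx])
  qed
qed

lemma bb2: assumes "x \<in> configs N" "x 1" "x N"
  shows "\<rho> x * exp (-(\<beta>*muR/2)) \<le> real N + 2"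
proof -
  define w where "w = flip x N"
  have wc: "w \<in> configs N" unfolding w_def using flip_configs assms(1) N2 by simp
  have w1: "w 1" "\<not> w N" using assms N2 unfolding w_def flip_def by auto
  have r: "rate N \<beta> muL muR x w \<ge> exp (-(\<beta>*muR/2))"
    using rate_ge_flipN[where N=N and \<beta>=\<beta> and a=muL and b=muR and x=x] eN_T[of x, OF assms(3)] N2 unfolding w_def by simp
  have "\<rho> x * exp (-(\<beta>*muR/2)) \<le> \<rho> x * rate N \<beta> muL muR x w"
    by (rule mult_left_mono[OF r rho_nonneg[OF assms(1)]])
  also have "\<dots> \<le> \<rho> w * Rout N \<beta> muL muR w" by (rule prim[OF assms(1) wc])
  also have "\<dots> \<le> 1 * (real N + 2)"
    by (rule mult_mono[OF rho_le1[OF wc] R_good[OF wc w1]]) (use R_good[OF wc w1] rho_nonneg[OF wc] Rout_nonneg in auto)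
  finally show ?thesis by simp
qed

lemma bb1: assumes "x \<in> configs N" "\<not> x 1"
  shows "\<rho> x * exp (\<beta>*muL/2) \<le> (real N + 2)^2"
proof -
  define w where "w = flip x 1"
  have wc: "w \<in> configs N" unfolding w_def using flip_configs assms(1) N2 by simp
  have w1: "w 1" "w N = x N" using assms N2 unfolding w_def flip_def by auto
  have r: "rate N \<beta> muL muR x w \<ge> exp (\<beta>*muL/2)"
    using rate_ge_flip1[where N=N and \<beta>=\<beta> and a=muL and b=muR and x=x] e1_F[of x, OF assms(2)] unfolding w_def by linarith
  have "\<rho> x * exp (\<beta>*muL/2) \<le> \<rho> x * rate N \<beta> muL muR x w"
    by (rule mult_left_mono[OF r rho_nonneg[OF assms(1)]])
  also have "\<dots> \<le> \<rho> w * Rout N \<beta> muL muR w" by (rule prim[OF assms(1) wc])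
  also have "\<dots> \<le> (real N + 2)^2"
  proof (cases "x N")
    case False
    hence wN: "\<not> w N" using w1 by simp
    have "\<rho> w * Rout N \<beta> muL muR w \<le> 1 * (real N + 2)"
      by (rule mult_mono[OF rho_le1[OF wc] R_good[OF wc w1(1) wN]]) (use R_good[OF wc w1(1) wN] rho_nonneg[OF wc] Rout_nonneg in auto)
    also have "\<dots> \<le> (real N + 2)^2" by (simp add: power2_eq_square)
    finally show ?thesis .
  next
    case True
    hence wN: "w N" using w1 by simp
    have Rw: "Rout N \<beta> muL muR w \<le> exp (-(\<beta>*muR/2)) * (real N + 2)"
    proof -
      have "Rout N \<beta> muL muR w \<le> real N + 1 + exp (-(\<beta>*muR/2))"
        using Rout_bound[OF wc, where \<beta>=\<beta> and a=muL and b=muR] e1_T[of w, OF w1(1)] eN_T[of w, OF wN] EF by linarith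
      moreover have "0 \<le> (exp (-(\<beta>*muR/2)) - 1) * (real N + 1)" using EF by simp
      ultimately show ?thesis by (simp add: algebra_simps)
    qed
    have "\<rho> w * Rout N \<beta> muL muR w \<le> \<rho> w * (exp (-(\<beta>*muR/2)) * (real N + 2))"
      by (rule mult_left_mono[OF Rw rho_nonneg[OF wc]])
    also have "\<dots> = (\<rho> w * exp (-(\<beta>*muR/2))) * (real N + 2)" by simp
    also have "\<dots> \<le> (real N + 2) * (real N + 2)"
      by (rule mult_right_mono[OF bb2[OF wc w1(1) wN]]) simp
    finally show ?thesis by (simp add: power2_eq_square)
  qed
  finally show ?thesis .
qed

lemma bad_bound: assumes "x \<in> configs N" "\<not> (x 1 \<and> \<not> x N)"
  shows "\<rho> x \<le> (real N + 2)^2 * exp (-(\<beta> * (min muL (-muR) / 2)))"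
proof -
  have rx: "\<rho> x \<ge> 0" by (rule rho_nonneg[OF assms(1)])
  have pos: "(real N + 2)^2 \<ge> 0" by simp
  show ?thesis
  proof (cases "x 1")
    case False
    have "\<rho> x * exp (\<beta>*muL/2) \<le> (real N + 2)^2" by (rule bb1[OF assms(1) False])
    hence "\<rho> x \<le> (real N + 2)^2 * exp (-(\<beta>*muL/2))"
      by (simp add: exp_minus field_simps)
    also have "\<dots> \<le> (real N + 2)^2 * exp (-(\<beta> * (min muL (-muR) / 2)))"
    proof (rule mult_left_mono[OF _ pos])
      have "\<beta> * min muL (-muR) \<le> \<beta> * muL" by (rule mult_left_mono) (use bpos in auto)
      moreover have "\<beta> * min muL (-muR) \<le> \<beta> * (-muR)" by (rule mult_left_mono) (use bpos in auto)
      ultimately show "exp (-(\<beta>*muL/2)) \<le> exp (-(\<beta> * (min muL (-muR) / 2)))" by auto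
    qed
    finally show ?thesis .
  next
    case True
    hence xN: "x N" using assms(2) by simp
    have "\<rho> x * exp (-(\<beta>*muR/2)) \<le> real N + 2" by (rule bb2[OF assms(1) True xN])
    also have "\<dots> \<le> (real N + 2)^2" by (simp add: power2_eq_square)
    finally have "\<rho> x \<le> (real N + 2)^2 * exp (\<beta>*muR/2)"
      by (simp add: exp_minus field_simps)
    also have "\<dots> \<le> (real N + 2)^2 * exp (-(\<beta> * (min muL (-muR) / 2)))"
    proof (rule mult_left_mono[OF _ pos])
      have "\<beta> * min muL (-muR) \<le> \<beta> * muL" by (rule mult_left_mono) (use bpos in auto)
      moreover have "\<beta> * min muL (-muR) \<le> \<beta> * (-muR)" by (rule mult_left_mono) (use bpos in auto)
      ultimately show "exp (\<beta>*muR/2) \<le> exp (-(\<beta> * (min muL (-muR) / 2)))" by auto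
    qed
    finally show ?thesis .
  qed
qed

lemma pos_prop: assumes "x \<in> configs N" "w \<in> configs N" "\<rho> w > 0" "rate N \<beta> muL muR w x > 0"
  shows "\<rho> x > 0"
proof (rule ccontr)
  assume "\<not> \<rho> x > 0"
  hence "\<rho> x = 0" using rho_nonneg[OF assms(1)] by simp
  hence "\<rho> w * rate N \<beta> muL muR w x \<le> 0" using prim[OF assms(2,1)] by simp
  moreover have "\<rho> w * rate N \<beta> muL muR w x > 0" using assms(3,4) by simp
  ultimately show False by simp
qed

lemma bad_pos: assumes "\<forall>w\<in>good N. \<rho> w > 0" "x \<in> configs N"
  shows "\<rho> x > 0"
proof -
  have flip_pos1: "rate N \<beta> muL muR u (flip u 1) > 0" for u
    using rate_ge_flip1[where N=N and \<beta>=\<beta> and a=muL and b=muR and x=u] by (meson exp_gt_zero less_le_trans)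
  have flip_posN: "rate N \<beta> muL muR u (flip u N) > 0" for u
  proof -
    have "N \<noteq> 1" using N2 by simp
    hence "exp (\<beta>*muR/2*(1-2 * occ u N)) \<le> rate N \<beta> muL muR u (flip u N)" by (rule rate_ge_flipN)
    thus ?thesis by (meson exp_gt_zero less_le_trans)
  qed
  have caseN: "\<rho> u > 0" if "u \<in> configs N" "u 1" for u
  proof (cases "u N")
    case False thus ?thesis using assms(1) that unfolding good_def by auto
  next
    case True
    define w where "w = flip u N"
    have wc: "w \<in> configs N" unfolding w_def using flip_configs that(1) N2 by simp
    have wg: "w \<in> good N" using wc that N2 True unfolding w_def flip_def good_def by auto
    have "u = flip w N" unfolding w_def flip_flip ..
    thus ?thesis using pos_prop[OF that(1) wc] assms(1) wg flip_posN by metis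
  qed
  show ?thesis
  proof (cases "x 1")
    case True thus ?thesis using caseN assms(2) by blast
  next
    case False
    define u where "u = flip x 1"
    have uc: "u \<in> configs N" unfolding u_def using flip_configs assms(2) N2 by simp
    have u1: "u 1" using False unfolding u_def flip_def by simp
    have "x = flip u 1" unfolding u_def flip_flip ..
    thus ?thesis using pos_prop[OF assms(2) uc caseN[OF uc u1]] flip_pos1 by metis
  qed
qed

end


lemma chain_bound:
  assumes N2: "N \<ge> 2" and mL: "muL > 0" and mR: "muR < 0"
    and st: "\<And>\<beta>. \<beta> > 0 \<Longrightarrow> stationary N \<beta> muL muR (\<rho> \<beta>)"
    and r: "(mstep N)\<^sup>*\<^sup>* y x"
  shows "\<exists>k. \<forall>\<beta>>0. (1 / (real N + 2)^2)^k * \<rho> \<beta> y \<le> \<rho> \<beta> x"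
  using r
proof (induction rule: rtranclp_induct)
  case base
  show ?case by (rule exI[of _ 0]) simp
next
  case (step z x)
  then obtain k where k: "\<forall>\<beta>>0. (1 / (real N + 2)^2)^k * \<rho> \<beta> y \<le> \<rho> \<beta> z" by blast
  have "\<forall>\<beta>>0. (1 / (real N + 2)^2)^(Suc k) * \<rho> \<beta> y \<le> \<rho> \<beta> x"
  proof (intro allI impI)
    fix \<beta> :: real assume b: "\<beta> > 0"
    have c0: "0 \<le> 1 / (real N + 2)^2" by simp
    have "(1 / (real N + 2)^2)^(Suc k) * \<rho> \<beta> y = (1 / (real N + 2)^2) * ((1 / (real N + 2)^2)^k * \<rho> \<beta> y)"
      by simp
    also have "\<dots> \<le> (1 / (real N + 2)^2) * \<rho> \<beta> z"
      using k b by (intro mult_left_mono[OF _ c0]) blast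
    also have "\<dots> = \<rho> \<beta> z / (real N + 2)^2" by simp
    also have "\<dots> \<le> \<rho> \<beta> x" by (rule step_bound[OF N2 mL mR b st[OF b] step.hyps(2)])
    finally show "(1 / (real N + 2)^2)^(Suc k) * \<rho> \<beta> y \<le> \<rho> \<beta> x" .
  qed
  thus ?case by blast
qed

theorem theorem6p1:
  fixes N :: nat and muL muR :: real
    and \<rho> :: "real \<Rightarrow> (nat \<Rightarrow> bool) \<Rightarrow> real"
    and x :: "nat \<Rightarrow> bool"
  assumes "N \<ge> 2"
    and "muL > 0" and "muR < 0"
    and "\<And>\<beta>. \<beta> > 0 \<Longrightarrow> stationary N \<beta> muL muR (\<rho> \<beta>)"
    and "x \<in> configs N"
  shows "asymp_one (\<lambda>\<beta>. \<rho> \<beta> x) \<longleftrightarrow> (x 1 \<and> \<not> x N)"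
proof -
  note N2 = assms(1) and mL = assms(2) and mR = assms(3) and st = assms(4) and xc = assms(5)
  define c where "c = 1 / (real N + 2)^2"
  have c1: "1 \<le> (real N + 2)^2"
  proof -
    have "1 * 1 \<le> (real N + 2) * (real N + 2)" by (rule mult_mono) auto
    thus ?thesis by (simp add: power2_eq_square)
  qed
  have c0: "0 < c" "c \<le> 1" unfolding c_def using c1 by auto
  define a0 where "a0 = min muL (-muR) / 2"
  have a0: "a0 > 0" unfolding a0_def using mL mR by simp
  define M where "M = card (configs N)"
  have fin: "finite (configs N)" by (rule configs_finite)
  have Cne: "configs N \<noteq> {}" using e0_good[OF N2] unfolding good_def by auto
  have M0: "real M > 0" unfolding M_def using fin Cne by (simp add: card_gt_0_iff)
  have finG: "finite (good N)" using fin unfolding good_def by simp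
  have bad: "\<rho> \<beta> y \<le> (real N + 2)^2 * exp (-(\<beta> * a0))"
    if "\<beta> > 0" "y \<in> configs N" "\<not> (y 1 \<and> \<not> y N)" for \<beta> y
    using bad_bound[OF N2 mL mR that(1) st[OF that(1)] that(2,3)] unfolding a0_def .
  have heavy: "eventually (\<lambda>\<beta>. \<beta> > 0 \<and> (\<exists>y\<in>good N. 1 / real M \<le> \<rho> \<beta> y)) at_top"
  proof -
    have "eventually (\<lambda>\<beta>. \<beta> > max 0 (ln (real M * (real N + 2)^2) / a0)) at_top"
      by (rule eventually_gt_at_top)
    thus ?thesis
    proof (rule eventually_mono)
      fix \<beta> :: real assume hb: "\<beta> > max 0 (ln (real M * (real N + 2)^2) / a0)"
      hence bp: "\<beta> > 0" and hb2: "ln (real M * (real N + 2)^2) < \<beta> * a0"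
        using a0 by (auto simp: pos_divide_less_eq)
      have Mp: "real M * (real N + 2)^2 > 0" using M0 by simp
      have "exp (-(\<beta> * a0)) < exp (- ln (real M * (real N + 2)^2))" using hb2 by simp
      also have "\<dots> = 1 / (real M * (real N + 2)^2)" using Mp by (simp add: exp_minus divide_inverse)
      finally have "(real N + 2)^2 * exp (-(\<beta> * a0)) < (real N + 2)^2 * (1 / (real M * (real N + 2)^2))"
        by (intro mult_strict_left_mono) auto
      also have "\<dots> = 1 / real M" by simp
      finally have small: "(real N + 2)^2 * exp (-(\<beta> * a0)) < 1 / real M" .
      have "\<exists>y\<in>configs N. 1 / real M \<le> \<rho> \<beta> y"
      proof (rule ccontr)
        assume "\<not> ?thesis"
        hence "\<And>y. y \<in> configs N \<Longrightarrow> \<rho> \<beta> y < 1 / real M" by auto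
        hence "(\<Sum>y\<in>configs N. \<rho> \<beta> y) < (\<Sum>y\<in>configs N. 1 / real M)"
          by (rule sum_strict_mono[OF fin Cne])
        also have "\<dots> = 1" using M0 unfolding M_def by simp
        finally show False using st[OF bp] by (simp add: stationary_def)
      qed
      then obtain y where yc: "y \<in> configs N" and yh: "1 / real M \<le> \<rho> \<beta> y" by blast
      have "y 1 \<and> \<not> y N"
      proof (rule ccontr)
        assume "\<not> (y 1 \<and> \<not> y N)"
        hence "\<rho> \<beta> y \<le> (real N + 2)^2 * exp (-(\<beta> * a0))" using bad[OF bp yc] by simp
        thus False using small yh by simp
      qed
      hence "y \<in> good N" using yc unfolding good_def by simp
      thus "\<beta> > 0 \<and> (\<exists>y\<in>good N. 1 / real M \<le> \<rho> \<beta> y)" using bp yh by blast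
    qed
  qed
  have lowgood: "\<exists>m>0. eventually (\<lambda>\<beta>. m \<le> \<rho> \<beta> w) at_top" if wg: "w \<in> good N" for w
  proof -
    let ?P = "\<lambda>k y. y \<in> good N \<longrightarrow> (\<forall>\<beta>>0. c^k * \<rho> \<beta> y \<le> \<rho> \<beta> w)"
    have "\<forall>y\<in>good N. \<exists>k. ?P k y"
      using chain_bound[OF N2 mL mR st good_connected[OF _ wg]] unfolding c_def by blast
    moreover have "\<forall>k k' y. ?P k y \<longrightarrow> k \<le> k' \<longrightarrow> ?P k' y"
    proof (intro allI impI)
      fix k k' :: nat and y and \<beta> :: real
      assume P: "?P k y" and kk: "k \<le> k'" and yg: "y \<in> good N" and b: "\<beta> > 0"
      have yc: "y \<in> configs N" using yg unfolding good_def by simp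
      have "c^k' * \<rho> \<beta> y \<le> c^k * \<rho> \<beta> y"
        by (rule mult_right_mono[OF power_decreasing[OF kk] rho_nonneg[OF N2 mL mR b st[OF b] yc]]) (use c0 in auto)
      also have "\<dots> \<le> \<rho> \<beta> w" using P yg b by blast
      finally show "c^k' * \<rho> \<beta> y \<le> \<rho> \<beta> w" .
    qed
    ultimately obtain K where K: "\<forall>y\<in>good N. ?P K y"
      using finite_common[OF finG, of ?P] by blast
    have "eventually (\<lambda>\<beta>. c^K / real M \<le> \<rho> \<beta> w) at_top"
      using heavy
    proof (rule eventually_mono)
      fix \<beta> assume "\<beta> > 0 \<and> (\<exists>y\<in>good N. 1 / real M \<le> \<rho> \<beta> y)"
      then obtain y where b: "\<beta> > 0" and yg: "y \<in> good N" and yh: "1 / real M \<le> \<rho> \<beta> y" by blast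
      have "c^K / real M = c^K * (1 / real M)" by simp
      also have "\<dots> \<le> c^K * \<rho> \<beta> y" by (rule mult_left_mono[OF yh]) (use c0 in simp)
      also have "\<dots> \<le> \<rho> \<beta> w" using K yg b by blast
      finally show "c^K / real M \<le> \<rho> \<beta> w" .
    qed
    moreover have "c^K / real M > 0" using c0 M0 by simp
    ultimately show ?thesis by blast
  qed
  show ?thesis
  proof
    assume asy: "asymp_one (\<lambda>\<beta>. \<rho> \<beta> x)"
    show "x 1 \<and> \<not> x N"
    proof (rule ccontr)
      assume nb: "\<not> (x 1 \<and> \<not> x N)"
      have ev1: "eventually (\<lambda>\<beta>. \<forall>w\<in>good N. 0 < \<rho> \<beta> w) at_top"
      proof (rule eventually_ball_finite[OF finG], rule ballI)
        fix w assume "w \<in> good N"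
        then obtain m where m: "m > 0" "eventually (\<lambda>\<beta>. m \<le> \<rho> \<beta> w) at_top" using lowgood by blast
        show "eventually (\<lambda>\<beta>. 0 < \<rho> \<beta> w) at_top"
          using m(2) by (rule eventually_mono) (use m(1) in simp)
      qed
      define L where "L = ln ((real N + 2)^2)"
      have ev2: "eventually (\<lambda>\<beta>. -a0/2 < ln (\<rho> \<beta> x) / \<beta>) at_top"
        using asy unfolding asymp_one_def by (rule order_tendstoD(1)) (use a0 in simp)
      have ev3: "eventually (\<lambda>\<beta>. \<beta> > max 0 (2 * L / a0)) at_top" by (rule eventually_gt_at_top)
      have ev4: "eventually (\<lambda>\<beta>. \<not> (-a0/2 < ln (\<rho> \<beta> x) / \<beta>)) at_top"
        using ev1 ev3
      proof (eventually_elim)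
        case (elim \<beta>)
        have b: "\<beta> > 0" and bL: "2 * L < \<beta> * a0" using elim(2) a0 by (auto simp: pos_divide_less_eq)
        have rp: "\<rho> \<beta> x > 0" by (rule bad_pos[OF N2 mL mR b st[OF b] elim(1) xc])
        have ub: "\<rho> \<beta> x \<le> (real N + 2)^2 * exp (-(\<beta> * a0))" by (rule bad[OF b xc nb])
        have "ln (\<rho> \<beta> x) \<le> ln ((real N + 2)^2 * exp (-(\<beta> * a0)))" by (rule ln_mono[OF ub rp])
        also have "\<dots> = L - \<beta> * a0" unfolding L_def by (simp add: ln_mult)
        finally have l1: "ln (\<rho> \<beta> x) \<le> L - \<beta> * a0" .
        show ?case
        proof
          assume "-a0/2 < ln (\<rho> \<beta> x) / \<beta>"
          hence "-a0/2 * \<beta> < ln (\<rho> \<beta> x)" using b by (simp add: pos_less_divide_eq)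
          thus False using l1 bL by (simp add: algebra_simps)
        qed
      qed
      show False using eventually_conj[OF ev2 ev4] by simp
    qed
  next
    assume g: "x 1 \<and> \<not> x N"
    hence xg: "x \<in> good N" using xc unfolding good_def by simp
    obtain m where m: "m > 0" "eventually (\<lambda>\<beta>. m \<le> \<rho> \<beta> x) at_top" using lowgood[OF xg] by blast
    have ev: "eventually (\<lambda>\<beta>. norm (ln (\<rho> \<beta> x) / \<beta>) \<le> - ln m / \<beta>) at_top"
      using m(2) eventually_gt_at_top[of 0]
    proof (eventually_elim)
      case (elim \<beta>)
      have b: "\<beta> > 0" using elim(2) .
      have le1: "\<rho> \<beta> x \<le> 1" by (rule rho_le1[OF N2 mL mR b st[OF b] xc])
      have rp: "\<rho> \<beta> x > 0" using elim(1) m(1) by simp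
      have "ln m \<le> ln (\<rho> \<beta> x)" by (rule ln_mono[OF elim(1) m(1)])
      moreover have "ln (\<rho> \<beta> x) \<le> 0" using le1 rp by simp
      ultimately have "\<bar>ln (\<rho> \<beta> x)\<bar> \<le> - ln m" by simp
      hence "\<bar>ln (\<rho> \<beta> x)\<bar> / \<beta> \<le> (- ln m) / \<beta>" using b by (intro divide_right_mono) auto
      thus ?case using b by simp
    qed
    have lim: "((\<lambda>\<beta>::real. - ln m / \<beta>) \<longlongrightarrow> 0) at_top"
    proof -
      have "((\<lambda>\<beta>::real. inverse \<beta>) \<longlongrightarrow> 0) at_top" by (rule tendsto_inverse_0_at_top[OF filterlim_ident])
      hence "((\<lambda>\<beta>::real. (- ln m) * inverse \<beta>) \<longlongrightarrow> (- ln m) * 0) at_top" by (intro tendsto_mult tendsto_const)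
      thus ?thesis by (simp add: divide_inverse)
    qed
    show "asymp_one (\<lambda>\<beta>. \<rho> \<beta> x)" unfolding asymp_one_def
      by (rule Lim_null_comparison[OF ev lim])
  qed
qed

end
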